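(* Consider the complex-tetrad reduced vacuum field equations (context) with $\mathcal{A}(\psi)\equiv\alpha$ a nonzero constant, and arbitrary $\beta$, $\kappa$, $\tilde{\mathcal{C}}$, $\mathcal{V}$. Let $A,C,\psi$ be smooth functions on an open interval $I\subset(0,\infty)$ with $A,C$ nowhere zero, satisfying $E^{(2)}_{tt}=0$ and $E^{(2)}_{\vartheta\vartheta}=0$ on $I$. Then $$rA(A-rA')\,C'+C\big(C^2-A^2+r^2A'^2+r^2AA''\big)=0\quad\text{on } I .$$ In particular, if $C\equiv1$ then there exist constants $M,\Lambda$ with $A(r)^2=1-\frac{2M}{r}-\Lambda r^2$ on $I$, i.e. the metric is Schwarzschild–(anti-)de Sitter, for every choice of $\tilde{\mathcal{C}}$ and $\mathcal{V}$.
   Context: Metric ansatz ${\rm d}s^2=A(r)^2{\rm d}t^2-\frac{C(r)^2}{A(r)^2}{\rm d}r^2-r^2{\rm d}\Omega^2$, scalar field $\psi=\psi(r)$. Primes on $A,C,\psi$ are $r$-derivatives; $\mathcal{A}',\tilde{\mathcal{C}}',\tilde{\mathcal{C}}'',\mathcal{V}'$ are $\psi$-derivatives evaluated at $\psi(r)$. The complex-tetrad reduced vacuum field equations of the scalar-torsion theory are: $E^{(2)}_{tt}:\ 0=\mathcal{A}\frac{A^2(-2rACA'-A^2(C-2rC')+C^3)}{r^2C^3}+\tilde{\mathcal{C}}'\frac{A^3(C(A'\psi'+A\psi'')-AC'\psi')}{C^3}-\frac{2A^4\psi'\mathcal{A}'}{rC^2}+\frac{A^4\psi'^2\tilde{\mathcal{C}}''}{C^2}-\frac{\beta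 A^4\psi'^2}{2C^2}+\kappa^2A^2\mathcal{V}$; $E^{(2)}_{rr}:\ 0=\frac{\mathcal{A}(-2rAA'-A^2+C^2)}{r^2A^2}+\big(\frac{A'}{A}+\frac2r\big)\psi'\tilde{\mathcal{C}}'+\frac{\kappa^2C^2\mathcal{V}}{A^2}+\frac12\beta\psi'^2$; $E^{(2)}_{\vartheta\vartheta}:\ 0=-\mathcal{A}'\frac{A(rA'+A)\psi'}{rC^2}+\tilde{\mathcal{C}}'\frac{A(C(A'\psi'+A\psi'')-AC'\psi')}{C^3}+\frac{\mathcal{A}(-rCA'^2+A(rA'C'-C(rA''+2A'))+A^2C')}{rC^3}+\frac{A^2\psi'^2\tilde{\mathcal{C}}''}{C^2}-\frac{\beta A^2\psi'^2}{2C^2}+\kappa^2\mathcal{V}$; $E^{(2)}_{\psi}:\ 0=\frac{(2rAA'+A^2+C^2)\mathcal{A}'}{r^2C^2}+\frac{\beta A(2rCA'\psi'+A(C(r\psi''+2\psi')-rC'\psi'))}{rC^3}+\frac{\tilde{\mathcal{C}}'(r^2CA'^2+rA(C(rA''+6A')-rA'C')+2A^2(C-rC'))}{r^2C^3}+\kappa^2\mathcal{V}'$. *)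

theory Defs
  imports "HOL-Analysis.Analysis"
begin

definition smooth_on :: "real set \<Rightarrow> (real \<Rightarrow> real) \<Rightarrow> bool" where
  "smooth_on S f \<longleftrightarrow> (\<forall>n. \<forall>x\<in>S. ((deriv ^^ n) f) differentiable (at x))"

text \<open>Arguments: coupling functions Acal, Ct (tilde C),
  V of psi, constants beta, kappa; metric functions A, C and scalar field psi of r.
  Primes on A, C, psi are r-derivatives; primes on Acal, Ct, V are psi-derivatives
  evaluated at psi r.\<close>
definition E_tt ::
  "(real \<Rightarrow> real) \<Rightarrow> (real \<Rightarrow> real) \<Rightarrow> (real \<Rightarrow> real) \<Rightarrow> real \<Rightarrow> real \<Rightarrow>
   (real \<Rightarrow> real) \<Rightarrow> (real \<Rightarrow> real) \<Rightarrow> (real \<Rightarrow> real) \<Rightarrow> real \<Rightarrow> real" where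
  "E_tt Acal Ct V \<beta> \<kappa> A C \<psi> r =
    (let a = A r; a1 = deriv A r; c = C r; c1 = deriv C r;
         p1 = deriv \<psi> r; p2 = deriv (deriv \<psi>) r; p = \<psi> r
     in Acal p * (a^2 * (-2*r*a*c*a1 - a^2*(c - 2*r*c1) + c^3)) / (r^2 * c^3)
        + deriv Ct p * (a^3 * (c*(a1*p1 + a*p2) - a*c1*p1)) / c^3
        - 2 * a^4 * p1 * deriv Acal p / (r * c^2)
        + a^4 * p1^2 * deriv (deriv Ct) p / c^2
        - \<beta> * a^4 * p1^2 / (2 * c^2)
        + \<kappa>^2 * a^2 * V p)"

definition E_thth ::
  "(real \<Rightarrow> real) \<Rightarrow> (real \<Rightarrow> real) \<Rightarrow> (real \<Rightarrow> real) \<Rightarrow> real \<Rightarrow> real \<Rightarrow>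
   (real \<Rightarrow> real) \<Rightarrow> (real \<Rightarrow> real) \<Rightarrow> (real \<Rightarrow> real) \<Rightarrow> real \<Rightarrow> real" where
  "E_thth Acal Ct V \<beta> \<kappa> A C \<psi> r =
    (let a = A r; a1 = deriv A r; a2 = deriv (deriv A) r; c = C r; c1 = deriv C r;
         p1 = deriv \<psi> r; p2 = deriv (deriv \<psi>) r; p = \<psi> r
     in - deriv Acal p * (a * (r*a1 + a) * p1) / (r * c^2)
        + deriv Ct p * (a * (c*(a1*p1 + a*p2) - a*c1*p1)) / c^3
        + Acal p * (- r*c*a1^2 + a*(r*a1*c1 - c*(r*a2 + 2*a1)) + a^2*c1) / (r * c^3)
        + a^2 * p1^2 * deriv (deriv Ct) p / c^2
        - \<beta> * a^2 * p1^2 / (2 * c^2)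
        + \<kappa>^2 * V p)"

end

theory Submission
  imports Defs
begin

lemma alg:
  fixes r a ad add c cd pd pdd \<alpha> \<beta> \<kappa> ct ctt v :: real
  assumes r: "r > 0" and a: "a \<noteq> 0" and c: "c \<noteq> 0" and al: "\<alpha> \<noteq> 0"
  and E1: "\<alpha> * (a^2 * (-2*r*a*c*ad - a^2*(c - 2*r*cd) + c^3)) / (r^2 * c^3)
        + ct * (a^3 * (c*(ad*pd + a*pdd) - a*cd*pd)) / c^3
        - 2 * a^4 * pd * 0 / (r * c^2)
        + a^4 * pd^2 * ctt / c^2
        - \<beta> * a^4 * pd^2 / (2 * c^2)
        + \<kappa>^2 * a^2 * v = 0"
  and E2: "- 0 * (a * (r*ad + a) * pd) / (r * c^2)
        + ct * (a * (c*(ad*pd + a*pdd) - a*cd*pd)) / c^3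
        + \<alpha> * (- r*c*ad^2 + a*(r*ad*cd - c*(r*add + 2*ad)) + a^2*cd) / (r * c^3)
        + a^2 * pd^2 * ctt / c^2
        - \<beta> * a^2 * pd^2 / (2 * c^2)
        + \<kappa>^2 * v = 0"
  shows "r * a * (a - r * ad) * cd + c * (c^2 - a^2 + r^2 * ad^2 + r^2 * a * add) = 0"
proof -
  have "\<alpha> * (a^2 * (-2*r*a*c*ad - a^2*(c - 2*r*cd) + c^3)) / (r^2 * c^3)
      - a^2 * (\<alpha> * (- r*c*ad^2 + a*(r*ad*cd - c*(r*add + 2*ad)) + a^2*cd) / (r * c^3)) = 0"
    using arg_cong2[OF E1 arg_cong[OF E2, of "\<lambda>x. a^2*x"], of "(-)"]
    by (simp add: algebra_simps power2_eq_square power3_eq_cube power4_eq_xxxx)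
  moreover have "\<alpha> * (a^2 * (-2*r*a*c*ad - a^2*(c - 2*r*cd) + c^3)) / (r^2 * c^3)
      - a^2 * (\<alpha> * (- r*c*ad^2 + a*(r*ad*cd - c*(r*add + 2*ad)) + a^2*cd) / (r * c^3))
      = (\<alpha> * a^2) * ((r * a * (a - r * ad) * cd + c * (c^2 - a^2 + r^2 * ad^2 + r^2 * a * add)) / (r^2*c^3))"
    using r c by (simp add: field_simps power2_eq_square power3_eq_cube)
  ultimately have "(\<alpha> * a^2) * ((r * a * (a - r * ad) * cd + c * (c^2 - a^2 + r^2 * ad^2 + r^2 * a * add)) / (r^2*c^3)) = 0" by simp
  thus ?thesis using r a c al by simp
qed

lemma smooth_derivs:
  assumes "smooth_on I f" "x \<in> I"
  shows "(f has_real_derivative deriv f x) (at x)"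
    "(deriv f has_real_derivative deriv (deriv f) x) (at x)"
proof -
  have "((deriv ^^ n) f) differentiable (at x)" for n
    using assms unfolding smooth_on_def by blast
  from this[of 0] this[of 1]
  show "(f has_real_derivative deriv f x) (at x)"
    "(deriv f has_real_derivative deriv (deriv f) x) (at x)"
    by (simp_all add: DERIV_deriv_iff_real_differentiable)
qed

theorem mainTheorem2:
  fixes Acal Ct V :: "real \<Rightarrow> real" and \<alpha> \<beta> \<kappa> :: real
    and A C \<psi> :: "real \<Rightarrow> real" and I :: "real set"
  assumes Aconst: "\<And>x. Acal x = \<alpha>" and alpha_nz: "\<alpha> \<noteq> 0"
    and Ct_smooth: "smooth_on UNIV Ct" and V_smooth: "smooth_on UNIV V"
    and I_open: "open I" and I_interval: "is_interval I" and I_ne: "I \<noteq> {}"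
    and I_pos: "I \<subseteq> {0<..}"
    and A_smooth: "smooth_on I A" and C_smooth: "smooth_on I C"
    and psi_smooth: "smooth_on I \<psi>"
    and A_nz: "\<And>r. r \<in> I \<Longrightarrow> A r \<noteq> 0" and C_nz: "\<And>r. r \<in> I \<Longrightarrow> C r \<noteq> 0"
    and Ett: "\<And>r. r \<in> I \<Longrightarrow> E_tt Acal Ct V \<beta> \<kappa> A C \<psi> r = 0"
    and Ethth: "\<And>r. r \<in> I \<Longrightarrow> E_thth Acal Ct V \<beta> \<kappa> A C \<psi> r = 0"
  shows "(\<forall>r\<in>I. r * A r * (A r - r * deriv A r) * deriv C r
              + C r * ((C r)^2 - (A r)^2 + r^2 * (deriv A r)^2
                       + r^2 * A r * deriv (deriv A) r) = 0)
         \<and> ((\<forall>r\<in>I. C r = 1) \<longrightarrow>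
              (\<exists>M \<Lambda> :: real. \<forall>r\<in>I. (A r)^2 = 1 - 2 * M / r - \<Lambda> * r^2))"
proof -
  have Ac: "Acal = (\<lambda>x. \<alpha>)" using Aconst by auto
  have dA: "deriv Acal x = 0" for x unfolding Ac by simp
  have P1: "\<forall>r\<in>I. r * A r * (A r - r * deriv A r) * deriv C r
              + C r * ((C r)^2 - (A r)^2 + r^2 * (deriv A r)^2
                       + r^2 * A r * deriv (deriv A) r) = 0"
  proof
    fix r assume r: "r \<in> I"
    have rp: "r > 0" using r I_pos by auto
    show "r * A r * (A r - r * deriv A r) * deriv C r
              + C r * ((C r)^2 - (A r)^2 + r^2 * (deriv A r)^2
                       + r^2 * A r * deriv (deriv A) r) = 0"
      apply (rule alg[where r=r and a="A r" and ad="deriv A r" and add="deriv (deriv A) r" and c="C r" and cd="deriv C r" and pd="deriv \<psi> r" and pdd="deriv (deriv \<psi>) r" and \<alpha>=\<alpha> and \<beta>=\<beta> and \<kappa>=\<kappa> and ct="deriv Ct (\<psi> r)" and ctt="deriv (deriv Ct) (\<psi> r)" and v="V (\<psi> r)"])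
      using rp A_nz[OF r] C_nz[OF r] alpha_nz apply simp_all
      using Ett[OF r] Ethth[OF r] by (simp_all add: E_tt_def E_thth_def Let_def dA Aconst)
  qed
  have P2: "\<exists>M \<Lambda> :: real. \<forall>r\<in>I. (A r)^2 = 1 - 2 * M / r - \<Lambda> * r^2" if C1: "\<forall>r\<in>I. C r = 1"
  proof -
    have dC: "deriv C r = 0" if r: "r \<in> I" for r
    proof -
      have "((\<lambda>x. 1) has_real_derivative 0) (at r)" by simp
      hence "(C has_real_derivative 0) (at r)"
        by (rule has_field_derivative_transform_within_open[OF _ I_open r]) (use C1 in auto)
      thus ?thesis by (rule DERIV_imp_deriv)
    qed
    have ode: "1 - (A r)^2 + r^2 * (deriv A r)^2 + r^2 * A r * deriv (deriv A) r = 0" if r: "r \<in> I" for r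
      using P1 r dC[OF r] C1 by auto
    define w where "w r = (A r)^2 - 1" for r
    define w1 where "w1 r = 2 * A r * deriv A r" for r
    define P where "P r = (r * w1 r + w r) / r^2" for r
    define Q where "Q r = r * (r * w1 r - 2 * w r)" for r
    have Dw: "(w has_real_derivative w1 r) (at r)" if r: "r \<in> I" for r
      using smooth_derivs(1)[OF A_smooth r] unfolding w_def[abs_def] w1_def
      by (auto intro!: derivative_eq_intros)
    have Dw1: "(w1 has_real_derivative 2 * (deriv A r)^2 + 2 * A r * deriv (deriv A) r) (at r)" if r: "r \<in> I" for r
      using smooth_derivs[OF A_smooth r] unfolding w1_def[abs_def]
      by (auto intro!: derivative_eq_intros simp: power2_eq_square)
    have wode: "r^2 * (2 * (deriv A r)^2 + 2 * A r * deriv (deriv A) r) = 2 * w r" if r: "r \<in> I" for r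
      using ode[OF r] unfolding w_def by (simp add: algebra_simps)
    have DP: "(P has_real_derivative 0) (at r)" if r: "r \<in> I" for r
    proof -
      have rp: "r > 0" using r I_pos by auto
      have "(P has_real_derivative
          ((w1 r + r * (2 * (deriv A r)^2 + 2 * A r * deriv (deriv A) r) + w1 r) * r^2 - (r * w1 r + w r) * (2 * r)) / (r^2)^2) (at r)"
        unfolding P_def[abs_def] using Dw[OF r] Dw1[OF r] rp
        by (auto intro!: derivative_eq_intros simp: power2_eq_square)
      moreover have "((w1 r + r * (2 * (deriv A r)^2 + 2 * A r * deriv (deriv A) r) + w1 r) * r^2 - (r * w1 r + w r) * (2 * r)) = 0"
      proof -
        have "r * (r^2 * (2 * (deriv A r)^2 + 2 * A r * deriv (deriv A) r)) = r * (2 * w r)"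
          using wode[OF r] by simp
        thus ?thesis by (simp add: algebra_simps power2_eq_square)
      qed
      ultimately show ?thesis by simp
    qed
    have DQ: "(Q has_real_derivative 0) (at r)" if r: "r \<in> I" for r
    proof -
      have "(Q has_real_derivative
          (r * w1 r - 2 * w r) + r * (w1 r + r * (2 * (deriv A r)^2 + 2 * A r * deriv (deriv A) r) - 2 * w1 r)) (at r)"
        unfolding Q_def[abs_def] using Dw[OF r] Dw1[OF r]
        by (auto intro!: derivative_eq_intros)
      moreover have "(r * w1 r - 2 * w r) + r * (w1 r + r * (2 * (deriv A r)^2 + 2 * A r * deriv (deriv A) r) - 2 * w1 r) = 0"
        using wode[OF r] by (simp add: algebra_simps power2_eq_square)
      ultimately show ?thesis by simp
    qed
    have conn: "connected I" using I_interval by (simp add: is_interval_connected)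
    obtain p where p: "\<And>x. x \<in> I \<Longrightarrow> P x = p"
      by (rule DERIV_zero_connected_constant[OF conn I_open finite.emptyI, of P])
        (use DP in \<open>auto intro!: continuous_at_imp_continuous_on DERIV_isCont\<close>)
    obtain q where q: "\<And>x. x \<in> I \<Longrightarrow> Q x = q"
      by (rule DERIV_zero_connected_constant[OF conn I_open finite.emptyI, of Q])
        (use DQ in \<open>auto intro!: continuous_at_imp_continuous_on DERIV_isCont\<close>)
    show ?thesis
    proof (intro exI ballI)
      fix r assume r: "r \<in> I"
      have rp: "r > 0" using r I_pos by auto
      have e1: "r * w1 r + w r = p * r^2" using p[OF r] rp unfolding P_def by (simp add: field_simps)
      have e2: "r * (r * w1 r - 2 * w r) = q" using q[OF r] unfolding Q_def by simp
      have h1: "r * r * w1 r + r * w r = p * r^3"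
      proof -
        have "r * (r * w1 r + w r) = r * (p * r^2)" using e1 by simp
        thus ?thesis by (simp add: algebra_simps power2_eq_square power3_eq_cube)
      qed
      have h2: "r * r * w1 r - 2 * (r * w r) = q" using e2 by (simp add: algebra_simps)
      have "3 * (r * w r) = p * r^3 - q" using h1 h2 by linarith
      hence "r * (3 * w r) = p * r^3 - q" by simp
      hence "w r = p / 3 * r^2 - q / (3 * r)" using rp
        by (simp add: field_simps power2_eq_square power3_eq_cube)
      thus "(A r)^2 = 1 - 2 * (q / 6) / r - (- p / 3) * r^2"
        unfolding w_def by (simp add: field_simps)
    qed
  qed
  show ?thesis using P1 P2 by blast
qed

end
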